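(* Let $1\le k\le N$ and let $\varphi(z)=\frac{Az+B}{\langle z,C\rangle+d}$ be a linear fractional self-map of $B_N$, with adjoint map $\sigma(z)=\frac{A^*z-C}{\langle z,-B\rangle+\overline{d}}$. If $\varphi$ maps $B_k=\{(z_1,\dots,z_N)\in B_N: z_i=0\text{ for } i>k\}$ into itself and the restriction of $\varphi$ to $B_k$ is an automorphism of $B_k$, then the first $k$ coordinate functions of $\varphi$ and of $\sigma$ depend only on the variables $z_1,\dots,z_k$.
   Context: $B_N$ is the open unit ball of $\mathbb{C}^N$, $\langle z,w\rangle=\sum_j z_j\overline{w_j}$, $A$ is an $N\times N$ complex matrix with conjugate transpose $A^*$, $B,C\in\mathbb{C}^N$, $d\in\mathbb{C}$. $B_k$ is identified with the unit ball of $\mathbb{C}^k$. *)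

theory Defs
  imports "HOL-Analysis.Analysis"
begin

text \<open>Points of C^N are represented as functions nat => complex whose coordinates
  with index >= N vanish; coordinate z_j of the paper is z (j-1) here.\<close>

definition cinner :: "nat \<Rightarrow> (nat \<Rightarrow> complex) \<Rightarrow> (nat \<Rightarrow> complex) \<Rightarrow> complex" where
  "cinner N z w = (\<Sum>j<N. z j * cnj (w j))"

definition cball_N :: "nat \<Rightarrow> (nat \<Rightarrow> complex) set" where
  "cball_N N = {z. (\<forall>i\<ge>N. z i = 0) \<and> (\<Sum>j<N. (cmod (z j))\<^sup>2) < 1}"

definition lf_map :: "nat \<Rightarrow> (nat \<Rightarrow> nat \<Rightarrow> complex) \<Rightarrow> (nat \<Rightarrow> complex) \<Rightarrow> (nat \<Rightarrow> complex)
    \<Rightarrow> complex \<Rightarrow> (nat \<Rightarrow> complex) \<Rightarrow> (nat \<Rightarrow> complex)" where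
  "lf_map N A B C d z = (\<lambda>i. if i < N then ((\<Sum>j<N. A i j * z j) + B i) / (cinner N z C + d) else 0)"

definition adj_mat :: "(nat \<Rightarrow> nat \<Rightarrow> complex) \<Rightarrow> (nat \<Rightarrow> nat \<Rightarrow> complex)" where
  "adj_mat A = (\<lambda>i j. cnj (A j i))"

text \<open>Holomorphy of a map defined on an open subset S of C^k (embedded as above):
  every coordinate function is continuous and holomorphic in each variable separately.\<close>
definition holo_k :: "nat \<Rightarrow> (nat \<Rightarrow> complex) set \<Rightarrow> ((nat \<Rightarrow> complex) \<Rightarrow> (nat \<Rightarrow> complex)) \<Rightarrow> bool" where
  "holo_k k S F \<longleftrightarrow>
     (\<forall>i<k. continuous_on S (\<lambda>z. F z i)) \<and>
     (\<forall>z\<in>S. \<forall>i<k. \<forall>j<k. (\<lambda>t. F (z(j := t)) i) field_differentiable (at (z j)))"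

definition is_aut_ball :: "nat \<Rightarrow> ((nat \<Rightarrow> complex) \<Rightarrow> (nat \<Rightarrow> complex)) \<Rightarrow> bool" where
  "is_aut_ball k F \<longleftrightarrow>
     F ` cball_N k \<subseteq> cball_N k \<and> holo_k k (cball_N k) F \<and>
     (\<exists>G. G ` cball_N k \<subseteq> cball_N k \<and> holo_k k (cball_N k) G \<and>
          (\<forall>z\<in>cball_N k. G (F z) = z \<and> F (G z) = z))"

end

theory Submission
  imports Defs
begin

lemma cmod_add_sq: "(cmod (x + y))\<^sup>2 = (cmod x)\<^sup>2 + 2 * Re (cnj x * y) + (cmod y)\<^sup>2"
  unfolding cmod_power2 by (simp add: power2_eq_square algebra_simps)

lemma sum_split_kN:
  fixes f :: "nat \<Rightarrow> 'a::comm_monoid_add"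
  assumes "k \<le> N" "\<And>i. k \<le> i \<Longrightarrow> i < N \<Longrightarrow> f i = 0"
  shows "(\<Sum>i<N. f i) = (\<Sum>i<k. f i)"
  using assms by (intro sum.mono_neutral_right) auto

context
  fixes N k :: nat and A :: "nat \<Rightarrow> nat \<Rightarrow> complex" and B C :: "nat \<Rightarrow> complex" and d :: complex
  assumes k1: "1 \<le> k" and kN: "k \<le> N"
    and denom: "\<forall>z\<in>cball_N N. cinner N z C + d \<noteq> 0"
    and self: "lf_map N A B C d ` cball_N N \<subseteq> cball_N N"
    and Bk: "lf_map N A B C d ` cball_N k \<subseteq> cball_N k"
begin

lemma ballk_sub: "cball_N k \<subseteq> cball_N N"
proof
  fix z assume z: "z \<in> cball_N k"
  hence "(\<Sum>j<N. (cmod (z j))\<^sup>2) = (\<Sum>j<k. (cmod (z j))\<^sup>2)"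
    by (intro sum_split_kN[OF kN]) (auto simp: cball_N_def)
  with z kN show "z \<in> cball_N N" by (auto simp: cball_N_def)
qed

lemma d_nz: "d \<noteq> 0"
proof -
  have "(\<lambda>_. 0) \<in> cball_N N" by (simp add: cball_N_def)
  with denom show ?thesis by (force simp: cinner_def)
qed

lemma F12: assumes "k \<le> i" "i < N" shows "B i = 0" "\<And>m. m < k \<Longrightarrow> A i m = 0"
proof -
  have "(\<lambda>_. 0) \<in> cball_N k" by (simp add: cball_N_def)
  hence "lf_map N A B C d (\<lambda>_. 0) \<in> cball_N k" using Bk by blast
  hence "lf_map N A B C d (\<lambda>_. 0) i = 0" using assms by (simp add: cball_N_def)
  thus B0: "B i = 0" using assms d_nz by (simp add: lf_map_def cinner_def)
  fix m assume m: "m < k"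
  define z where "z = (\<lambda>j. if j = m then (1/2::complex) else 0)"
  have "(\<Sum>j<k. (cmod (z j))\<^sup>2) = (\<Sum>j<k. if j = m then 1/4 else (0::real))"
    by (intro sum.cong) (auto simp: z_def power2_eq_square)
  hence "(\<Sum>j<k. (cmod (z j))\<^sup>2) = 1/4" using m by simp
  hence "z \<in> cball_N k" unfolding cball_N_def using m by (auto simp: z_def)
  hence zN: "z \<in> cball_N N" using ballk_sub by blast
  have "lf_map N A B C d z \<in> cball_N k" using Bk \<open>z \<in> cball_N k\<close> by blast
  hence "lf_map N A B C d z i = 0" using assms by (simp add: cball_N_def)
  moreover have "(\<Sum>j<N. A i j * z j) = A i m / 2"
    using m kN by (simp add: z_def if_distrib cong: if_cong)
  moreover have "cinner N z C + d \<noteq> 0" using denom zN by blast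
  ultimately show "A i m = 0" using assms B0 by (auto simp: lf_map_def) (metis add.commute distrib_left mult_eq_0_iff zero_neq_numeral)
qed

lemma ray_ineq:
  fixes e :: "nat \<Rightarrow> complex" and j :: nat and s :: real and t :: complex
  assumes e0: "\<forall>m\<ge>k. e m = 0" and e1: "(\<Sum>m<k. (cmod (e m))\<^sup>2) = 1"
    and j: "k \<le> j" "j < N" and s: "0 \<le> s" and st: "s\<^sup>2 + (cmod t)\<^sup>2 < 1"
  shows "0 < (cmod (of_real s * cinner N e C + d))\<^sup>2 - (\<Sum>i<N. (cmod (of_real s * (\<Sum>m<N. A i m * e m) + B i))\<^sup>2)
     + 2 * Re (t * cnj ((of_real s * cinner N e C + d) * C j - (\<Sum>i<N. (of_real s * (\<Sum>m<N. A i m * e m) + B i) * cnj (A i j))))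
     + (cmod t)\<^sup>2 * ((cmod (C j))\<^sup>2 - (\<Sum>i<N. (cmod (A i j))\<^sup>2))"
proof -
  define z where "z = (\<lambda>m. of_real s * e m + (if m = j then t else 0))"
  define D0 where "D0 = of_real s * cinner N e C + d"
  define al where "al = (\<lambda>i. of_real s * (\<Sum>m<N. A i m * e m) + B i)"
  have ej: "e j = 0" using e0 j by auto
  have zn: "(cmod (z m))\<^sup>2 = s\<^sup>2 * (cmod (e m))\<^sup>2 + (if m = j then (cmod t)\<^sup>2 else 0)" for m
    using ej by (auto simp: z_def norm_mult power_mult_distrib)
  have "(\<Sum>m<N. (cmod (e m))\<^sup>2) = (\<Sum>m<k. (cmod (e m))\<^sup>2)"
    using e0 by (intro sum_split_kN[OF kN]) auto
  hence "(\<Sum>m<N. (cmod (z m))\<^sup>2) = s\<^sup>2 + (cmod t)\<^sup>2"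
    using j e1 by (simp add: zn sum.distrib sum_distrib_left[symmetric])
  moreover have "\<forall>m\<ge>N. z m = 0" using e0 j kN by (auto simp: z_def)
  ultimately have zN: "z \<in> cball_N N" using st by (simp add: cball_N_def)
  have p1: "z m * cnj (C m) = of_real s * (e m * cnj (C m)) + (if m = j then t * cnj (C j) else 0)" for m
    by (simp add: z_def algebra_simps)
  have Dz: "cinner N z C + d = D0 + t * cnj (C j)"
    using j unfolding cinner_def p1 by (simp add: D0_def sum.distrib sum_distrib_left cinner_def)
  have p2: "A i m * z m = of_real s * (A i m * e m) + (if m = j then t * A i j else 0)" for i m
    by (simp add: z_def algebra_simps)
  have az: "(\<Sum>m<N. A i m * z m) + B i = al i + t * A i j" for i
    using j unfolding p2 by (simp add: al_def sum.distrib sum_distrib_left)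
  have Dnz: "D0 + t * cnj (C j) \<noteq> 0" using denom zN Dz by metis
  have "lf_map N A B C d z \<in> cball_N N" using self zN by blast
  hence "(\<Sum>i<N. (cmod (lf_map N A B C d z i))\<^sup>2) < 1" by (simp add: cball_N_def)
  moreover have "(\<Sum>i<N. (cmod (lf_map N A B C d z i))\<^sup>2)
      = (\<Sum>i<N. (cmod (al i + t * A i j))\<^sup>2) / (cmod (D0 + t * cnj (C j)))\<^sup>2"
    by (simp add: lf_map_def az Dz norm_divide power_divide sum_divide_distrib)
  ultimately have lt: "(\<Sum>i<N. (cmod (al i + t * A i j))\<^sup>2) < (cmod (D0 + t * cnj (C j)))\<^sup>2"
    using Dnz by (simp add: divide_less_eq)
  have "0 < (cmod (D0 + t * cnj (C j)))\<^sup>2 - (\<Sum>i<N. (cmod (al i + t * A i j))\<^sup>2)"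
    using lt by simp
  also have "\<dots> = (cmod D0)\<^sup>2 - (\<Sum>i<N. (cmod (al i))\<^sup>2)
     + 2 * Re (t * cnj (D0 * C j - (\<Sum>i<N. al i * cnj (A i j))))
     + (cmod t)\<^sup>2 * ((cmod (C j))\<^sup>2 - (\<Sum>i<N. (cmod (A i j))\<^sup>2))"
    by (simp add: cmod_add_sq sum.distrib norm_mult power_mult_distrib cnj_sum Re_sum
        sum_subtractf sum_distrib_left algebra_simps)
  finally show ?thesis by (simp add: D0_def al_def)
qed

lemma ray_zero:
  fixes e :: "nat \<Rightarrow> complex" and j :: nat and G :: "(nat \<Rightarrow> complex) \<Rightarrow> (nat \<Rightarrow> complex)"
  assumes e0: "\<forall>m\<ge>k. e m = 0" and e1: "(\<Sum>m<k. (cmod (e m))\<^sup>2) = 1"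
    and j: "k \<le> j" "j < N"
    and GB: "G ` cball_N k \<subseteq> cball_N k"
    and Gc: "\<forall>i<k. continuous_on (cball_N k) (\<lambda>z. G z i)"
    and GF: "\<forall>z\<in>cball_N k. G (lf_map N A B C d z) = z"
  shows "(cinner N e C + d) * C j - (\<Sum>i<N. ((\<Sum>m<N. A i m * e m) + B i) * cnj (A i j)) = 0"
proof -
  define D1 where "D1 = cinner N e C"
  define a where "a = (\<lambda>i. \<Sum>m<N. A i m * e m)"
  define q where "q = (\<lambda>s::real. (cmod (of_real s * D1 + d))\<^sup>2 - (\<Sum>i<N. (cmod (of_real s * a i + B i))\<^sup>2))"
  define gs where "gs = (\<lambda>s::real. (of_real s * D1 + d) * C j - (\<Sum>i<N. (of_real s * a i + B i) * cnj (A i j)))"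
  define K0 where "K0 = (cmod (C j))\<^sup>2 - (\<Sum>i<N. (cmod (A i j))\<^sup>2)"
  have P: "0 < q s + 2 * Re (t * cnj (gs s)) + (cmod t)\<^sup>2 * K0" if "0 \<le> s" "s\<^sup>2 + (cmod t)\<^sup>2 < 1" for s t
    using ray_ineq[OF e0 e1 j that] by (simp add: q_def gs_def K0_def D1_def a_def)
  have qpos: "0 < q s" if "0 \<le> s" "s < 1" for s
  proof -
    have "s\<^sup>2 < 1" using that by (metis abs_of_nonneg abs_square_less_1)
    thus ?thesis using P[of s 0] that by simp
  qed
  have qcont: "continuous_on UNIV q" unfolding q_def by (intro continuous_intros)
  have evs: "eventually (\<lambda>s. s \<in> {0<..<1}) (at_left (1::real))"
    by (rule eventually_at_left_real) simp
  have q1ge: "0 \<le> q 1"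
  proof (rule tendsto_lowerbound)
    have "isCont q 1" using qcont continuous_on_eq_continuous_at[of UNIV q] by simp
    hence "(q \<longlongrightarrow> q 1) (at 1)" by (simp add: isCont_def)
    thus "(q \<longlongrightarrow> q 1) (at_left 1)" by (rule tendsto_within_subset) simp
    show "eventually (\<lambda>s. 0 \<le> q s) (at_left 1)"
      using evs by eventually_elim (simp add: less_imp_le qpos)
    show "at_left (1::real) \<noteq> bot" by simp
  qed
  have q1: "q 1 = 0"
  proof (rule ccontr)
    assume "q 1 \<noteq> 0"
    hence q1p: "0 < q 1" using q1ge by simp
    define den where "den = (\<lambda>s::real. of_real s * D1 + d)"
    define h where "h = (\<lambda>s::real. \<lambda>i. if i < N then (of_real s * a i + B i) / den s else 0)"
    have den1: "den 1 \<noteq> 0"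
    proof
      assume "den 1 = 0"
      hence "q 1 = - (\<Sum>i<N. (cmod (of_real 1 * a i + B i))\<^sup>2)" by (simp add: q_def den_def)
      also have "\<dots> \<le> 0" by (simp add: sum_nonneg)
      finally show False using q1p by simp
    qed
    have phis: "lf_map N A B C d (\<lambda>m. of_real s * e m) = h s" for s
      by (rule ext) (simp add: lf_map_def h_def den_def a_def D1_def cinner_def sum_distrib_left
          mult.left_commute mult.assoc)
    have seB: "(\<lambda>m. of_real s * e m) \<in> cball_N k" if "0 \<le> s" "s < 1" for s
    proof -
      have "s\<^sup>2 < 1" using that by (metis abs_of_nonneg abs_square_less_1)
      moreover have "(\<Sum>m<k. (cmod (of_real s * e m))\<^sup>2) = s\<^sup>2 * (\<Sum>m<k. (cmod (e m))\<^sup>2)"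
        by (simp add: norm_mult power_mult_distrib sum_distrib_left)
      ultimately show ?thesis using e0 e1 by (simp add: cball_N_def)
    qed
    have h1eq: "h 1 = lf_map N A B C d e" using phis[of 1] by simp
    have aik: "a i = 0" if "k \<le> i" "i < N" for i
      unfolding a_def using F12(2)[OF that] e0 by (intro sum.neutral) (metis not_le mult_eq_0_iff)
    have h1B: "h 1 \<in> cball_N k"
    proof -
      have z: "\<forall>i\<ge>k. h 1 i = 0" using aik F12(1) by (simp add: h_def)
      have "(\<Sum>i<k. (cmod (h 1 i))\<^sup>2) = (\<Sum>i<N. (cmod (h 1 i))\<^sup>2)"
        using z by (intro sum_split_kN[OF kN, symmetric]) auto
      also have "\<dots> = (\<Sum>i<N. (cmod (of_real 1 * a i + B i))\<^sup>2) / (cmod (den 1))\<^sup>2"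
        by (simp add: h_def norm_divide power_divide sum_divide_distrib)
      also have "\<dots> < 1" using q1p den1 by (simp add: divide_less_eq q_def den_def)
      finally show ?thesis using z by (simp add: cball_N_def)
    qed
    have hcont: "(h \<longlongrightarrow> h 1) (at_left 1)"
    proof -
      define S where "S = {s::real. den s \<noteq> 0}"
      have dc: "continuous_on UNIV den" unfolding den_def by (intro continuous_intros)
      have oS: "open S" unfolding S_def by (rule open_Collect_neq[OF dc continuous_on_const])
      have "continuous_on S h"
      proof (rule continuous_on_coordinatewise_then_product)
        fix i
        show "continuous_on S (\<lambda>s. h s i)"
        proof (cases "i < N")
          case True
          thus ?thesis unfolding h_def S_def using True
            by (simp add: den_def) (intro continuous_intros, auto)
        qed (simp add: h_def)
      qed
      moreover have "1 \<in> S" using den1 by (simp add: S_def)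
      ultimately have "isCont h 1" using oS continuous_on_eq_continuous_at by blast
      hence "(h \<longlongrightarrow> h 1) (at 1)" by (simp add: isCont_def)
      thus ?thesis by (rule tendsto_within_subset) simp
    qed
    have evh: "eventually (\<lambda>s. h s \<in> cball_N k \<and> G (h s) = (\<lambda>m. of_real s * e m)) (at_left 1)"
      using evs
    proof eventually_elim
      case (elim s)
      hence "(\<lambda>m. of_real s * e m) \<in> cball_N k" by (intro seB) auto
      thus ?case using Bk GF phis[of s] by (metis image_subset_iff)
    qed
    have Gi: "G (h 1) i = e i" if "i < k" for i
    proof -
      have ev1: "eventually (\<lambda>s. h s \<in> cball_N k) (at_left 1)"
        using evh by (rule eventually_mono) auto
      have t1: "((\<lambda>s. G (h s) i) \<longlongrightarrow> G (h 1) i) (at_left 1)"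
        using continuous_on_tendsto_compose[OF Gc[rule_format, OF that] hcont h1B ev1] by simp
      have "((\<lambda>s. of_real s * e i) \<longlongrightarrow> of_real 1 * e i) (at_left (1::real))"
        by (intro tendsto_intros)
      hence t0: "((\<lambda>s. of_real s * e i) \<longlongrightarrow> e i) (at_left (1::real))" by simp
      have ev2: "eventually (\<lambda>s. of_real s * e i = G (h s) i) (at_left 1)"
        using evh by (rule eventually_mono) auto
      have t2: "((\<lambda>s. G (h s) i) \<longlongrightarrow> e i) (at_left 1)"
        using Lim_transform_eventually[OF t0 ev2] .
      show ?thesis using tendsto_unique[OF _ t1 t2] by simp
    qed
    have "G (h 1) \<in> cball_N k" using GB h1B by blast
    hence "(\<Sum>i<k. (cmod (G (h 1) i))\<^sup>2) < 1" by (simp add: cball_N_def)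
    moreover have "(\<Sum>i<k. (cmod (G (h 1) i))\<^sup>2) = 1" using e1 Gi by simp
    ultimately show False by simp
  qed
  define X where "X = (cmod D1)\<^sup>2 - (\<Sum>i<N. (cmod (a i))\<^sup>2)"
  define Y where "Y = Re (cnj d * D1) - (\<Sum>i<N. Re (cnj (B i) * a i))"
  define Z where "Z = (cmod d)\<^sup>2 - (\<Sum>i<N. (cmod (B i))\<^sup>2)"
  have qform: "q s = s\<^sup>2 * X + 2 * s * Y + Z" for s
  proof -
    have e1: "(cmod (of_real s * D1 + d))\<^sup>2 = (cmod d)\<^sup>2 + 2 * s * Re (cnj d * D1) + s\<^sup>2 * (cmod D1)\<^sup>2"
      using cmod_add_sq[of d "of_real s * D1"] by (simp add: norm_mult power_mult_distrib algebra_simps)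
    have e2: "(cmod (of_real s * a i + B i))\<^sup>2 = (cmod (B i))\<^sup>2 + 2 * s * Re (cnj (B i) * a i) + s\<^sup>2 * (cmod (a i))\<^sup>2" for i
      using cmod_add_sq[of "B i" "of_real s * a i"] by (simp add: norm_mult power_mult_distrib algebra_simps)
    show ?thesis unfolding q_def e1 e2
      by (simp add: X_def Y_def Z_def sum.distrib sum_distrib_left sum_subtractf algebra_simps)
  qed
  define L where "L = (\<lambda>s::real. - X * (s + 1) - 2 * Y)"
  have qL: "q s = (1 - s) * L s" for s
  proof -
    have "X + 2 * Y + Z = 0" using q1 qform[of 1] by simp
    thus ?thesis unfolding qform L_def by (simp add: power2_eq_square algebra_simps)
  qed
  have gs1: "gs 1 = 0"
  proof (rule ccontr)
    assume G1: "gs 1 \<noteq> 0"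
    define u where "u = gs 1 / of_real (cmod (gs 1))"
    define \<epsilon> where "\<epsilon> = (\<bar>L 1\<bar> + 1) / cmod (gs 1)"
    define F where "F = (\<lambda>s::real. L s - 2 * \<epsilon> * Re (u * cnj (gs s)) + \<epsilon>\<^sup>2 * (1 - s) * K0)"
    define H where "H = (\<lambda>s::real. 1 + s - \<epsilon>\<^sup>2 * (1 - s))"
    have epos: "0 < \<epsilon>" using G1 by (simp add: \<epsilon>_def)
    have u1: "cmod u = 1" using G1 by (simp add: u_def norm_divide)
    have Reu: "Re (u * cnj (gs 1)) = cmod (gs 1)"
    proof -
      have "u * cnj (gs 1) = of_real ((cmod (gs 1))\<^sup>2) / of_real (cmod (gs 1))"
        by (simp add: u_def complex_norm_square[symmetric])
      thus ?thesis using G1 by (simp add: power2_eq_square)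
    qed
    have F1: "F 1 < 0"
    proof -
      have "F 1 = L 1 - 2 * \<epsilon> * Re (u * cnj (gs 1)) + \<epsilon>\<^sup>2 * (1 - 1) * K0" by (simp only: F_def)
      also have "\<dots> = L 1 - 2 * (\<epsilon> * cmod (gs 1))" by (simp only: Reu) simp
      also have "\<epsilon> * cmod (gs 1) = \<bar>L 1\<bar> + 1" using G1 by (simp add: \<epsilon>_def)
      finally have "F 1 = L 1 - 2 * (\<bar>L 1\<bar> + 1)" .
      thus ?thesis by simp
    qed
    have Fc: "isCont F 1" unfolding F_def gs_def L_def by (intro continuous_intros continuous_Re)
    have Hc: "isCont H 1" unfolding H_def by (intro continuous_intros)
    have evF: "eventually (\<lambda>s. F s < 0) (at_left 1)"
      using order_tendstoD(2)[OF tendsto_within_subset[OF Fc[unfolded isCont_def]] F1] by simp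
    have evH: "eventually (\<lambda>s. 0 < H s) (at_left 1)"
    proof -
      have "(H \<longlongrightarrow> H 1) (at_left 1)"
        by (rule tendsto_within_subset[OF Hc[unfolded isCont_def]]) simp
      moreover have "(0::real) < H 1" by (simp add: H_def)
      ultimately show ?thesis by (rule order_tendstoD(1))
    qed
    have "eventually (\<lambda>s. F s < 0 \<and> 0 < H s \<and> s \<in> {0<..<1}) (at_left (1::real))"
      using evF evH evs by eventually_elim auto
    then obtain s where s: "F s < 0" "0 < H s" "0 < s" "s < 1"
      using eventually_happens'[of "at_left (1::real)"] by force
    define t where "t = - of_real (\<epsilon> * (1 - s)) * u"
    have ct: "cmod t = \<epsilon> * (1 - s)" unfolding t_def norm_mult norm_minus_cancel norm_of_real u1 using epos s by simp
    have "s\<^sup>2 + (cmod t)\<^sup>2 < 1"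
    proof -
      have "0 < (1 - s) * H s" using s by simp
      thus ?thesis unfolding ct H_def by (simp add: power2_eq_square algebra_simps)
    qed
    hence "0 < q s + 2 * Re (t * cnj (gs s)) + (cmod t)\<^sup>2 * K0" using P[of s t] s by simp
    also have "\<dots> = (1 - s) * F s"
      unfolding qL ct by (simp add: t_def F_def power2_eq_square algebra_simps)
    also have "\<dots> < 0" using s by (simp add: mult_pos_neg)
    finally show False .
  qed
  thus ?thesis by (simp add: gs_def D1_def a_def)
qed

lemma FC:
  assumes aut: "is_aut_ball k (lf_map N A B C d)" and j: "k \<le> j" "j < N"
  shows "C j = 0" "\<And>i. i < k \<Longrightarrow> A i j = 0"
proof -
  obtain G where GB: "G ` cball_N k \<subseteq> cball_N k"
    and Gc: "\<forall>i<k. continuous_on (cball_N k) (\<lambda>z. G z i)"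
    and GFG: "\<forall>z\<in>cball_N k. G (lf_map N A B C d z) = z \<and> lf_map N A B C d (G z) = z"
    using aut unfolding is_aut_ball_def holo_k_def by blast
  have GF: "\<forall>z\<in>cball_N k. G (lf_map N A B C d z) = z" using GFG by blast
  define gz where "gz = (\<lambda>z. (cinner N z C + d) * C j - (\<Sum>i<N. ((\<Sum>m<N. A i m * z m) + B i) * cnj (A i j)))"
  define g0 where "g0 = d * C j - (\<Sum>i<N. B i * cnj (A i j))"
  define hc where "hc = (\<lambda>m. cnj (C m) * C j - (\<Sum>i<N. A i m * cnj (A i j)))"
  have lin: "gz z = g0 + (\<Sum>m<N. z m * hc m)" for z
  proof -
    have "(\<Sum>i<N. (\<Sum>m<N. A i m * z m) * cnj (A i j)) = (\<Sum>i<N. \<Sum>m<N. z m * (A i m * cnj (A i j)))"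
      by (intro sum.cong refl) (simp add: sum_distrib_left sum_distrib_right ac_simps)
    also have "\<dots> = (\<Sum>m<N. \<Sum>i<N. z m * (A i m * cnj (A i j)))" by (rule sum.swap)
    finally show ?thesis
      by (simp add: gz_def g0_def hc_def cinner_def sum_distrib_left sum_distrib_right
          sum_subtractf sum.distrib algebra_simps)
  qed
  have unit: "g0 + \<sigma> * hc m = 0" if m: "m < k" and sg: "\<sigma> = 1 \<or> \<sigma> = -1" for m \<sigma>
  proof -
    define e where "e = (\<lambda>i. if i = m then \<sigma> else 0)"
    have e0: "\<forall>i\<ge>k. e i = 0" using m by (auto simp: e_def)
    have "(\<Sum>i<k. (cmod (e i))\<^sup>2) = (\<Sum>i<k. if i = m then 1 else (0::real))"
      using sg by (intro sum.cong) (auto simp: e_def)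
    hence e1: "(\<Sum>i<k. (cmod (e i))\<^sup>2) = 1" using m by simp
    have "gz e = 0" using ray_zero[OF e0 e1 j GB Gc GF] by (simp add: gz_def)
    moreover have "(\<Sum>i<N. e i * hc i) = (\<Sum>i<N. if i = m then \<sigma> * hc m else 0)"
      by (intro sum.cong) (auto simp: e_def)
    hence "(\<Sum>i<N. e i * hc i) = \<sigma> * hc m" using m kN by simp
    ultimately show ?thesis by (simp add: lin)
  qed
  have k0: "0 < k" using k1 by simp
  have "g0 + 1 * hc 0 = 0" "g0 + (-1) * hc 0 = 0" using unit[OF k0] by blast+
  hence g00: "g0 = 0" by simp
  have hc0: "hc m = 0" if "m < k" for m using unit[of m 1] that g00 by simp
  have gzB: "gz p = 0" if "p \<in> cball_N k" for p
  proof -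
    have "(\<Sum>m<N. p m * hc m) = 0"
      using that hc0 by (intro sum.neutral) (auto simp: cball_N_def, metis not_le mult_zero_left)
    thus ?thesis by (simp add: lin g00)
  qed
  have key: "C j = (\<Sum>i<N. w i * cnj (A i j))" if w: "w \<in> cball_N k" for w
  proof -
    define p where "p = G w"
    have pB: "p \<in> cball_N k" using GB w by (auto simp: p_def)
    hence pN: "p \<in> cball_N N" using ballk_sub by blast
    have Fp: "lf_map N A B C d p = w" using GFG w by (simp add: p_def)
    define Dp where "Dp = cinner N p C + d"
    have Dnz: "Dp \<noteq> 0" using denom pN by (simp add: Dp_def)
    have num: "(\<Sum>m<N. A i m * p m) + B i = w i * Dp" if "i < N" for i
    proof -
      have "w i = ((\<Sum>m<N. A i m * p m) + B i) / Dp" using Fp that by (auto simp: lf_map_def Dp_def)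
      thus ?thesis using Dnz by simp
    qed
    have s1: "(\<Sum>i<N. ((\<Sum>m<N. A i m * p m) + B i) * cnj (A i j)) = (\<Sum>i<N. Dp * (w i * cnj (A i j)))"
      by (intro sum.cong refl) (simp add: num)
    have "gz p = Dp * C j - (\<Sum>i<N. Dp * (w i * cnj (A i j)))"
      unfolding gz_def s1 Dp_def by simp
    also have "\<dots> = Dp * (C j - (\<Sum>i<N. w i * cnj (A i j)))"
      by (simp add: sum_distrib_left right_diff_distrib)
    finally have "gz p = Dp * (C j - (\<Sum>i<N. w i * cnj (A i j)))" .
    thus ?thesis using gzB[OF pB] Dnz by simp
  qed
  have "(\<lambda>_. 0) \<in> cball_N k" by (simp add: cball_N_def)
  from key[OF this] show Cj: "C j = 0" by simp
  fix i assume i: "i < k"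
  define w where "w = (\<lambda>m. if m = i then (1/2::complex) else 0)"
  have "(\<Sum>m<k. (cmod (w m))\<^sup>2) = (\<Sum>m<k. if m = i then 1/4 else (0::real))"
    by (intro sum.cong) (auto simp: w_def power2_eq_square)
  hence "(\<Sum>m<k. (cmod (w m))\<^sup>2) = 1/4" using i by simp
  hence "w \<in> cball_N k" unfolding cball_N_def using i by (auto simp: w_def)
  moreover have "(\<Sum>m<N. w m * cnj (A m j)) = (\<Sum>m<N. if m = i then cnj (A i j) / 2 else 0)"
    by (intro sum.cong) (auto simp: w_def)
  ultimately have "C j = cnj (A i j) / 2" using key i kN by simp
  thus "A i j = 0" using Cj by simp
qed

end

lemma sum_agree:
  fixes N k :: nat
  assumes "\<forall>j<N. k \<le> j \<longrightarrow> f j = 0" "\<forall>j<k. z j = w j"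
  shows "(\<Sum>j<N. f j * (z j :: complex)) = (\<Sum>j<N. f j * w j)"
    "(\<Sum>j<N. z j * f j) = (\<Sum>j<N. w j * f j)"
proof -
  have t: "f j * z j = f j * w j" if "j < N" for j
  proof (cases "j < k")
    case True thus ?thesis using assms(2) by simp
  next
    case False hence "f j = 0" using assms(1) that by (simp add: not_less)
    thus ?thesis by simp
  qed
  show "(\<Sum>j<N. f j * (z j :: complex)) = (\<Sum>j<N. f j * w j)" by (intro sum.cong refl) (simp add: t)
  show "(\<Sum>j<N. z j * f j) = (\<Sum>j<N. w j * f j)" by (intro sum.cong refl) (simp add: t mult.commute)
qed

theorem lemma4p2:
  fixes N k :: nat and A :: "nat \<Rightarrow> nat \<Rightarrow> complex" and B C :: "nat \<Rightarrow> complex" and d :: complex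
  assumes "1 \<le> k" and "k \<le> N"
    and denom: "\<forall>z\<in>cball_N N. cinner N z C + d \<noteq> 0"
    and self: "lf_map N A B C d ` cball_N N \<subseteq> cball_N N"
    and Bk: "lf_map N A B C d ` cball_N k \<subseteq> cball_N k"
    and aut: "is_aut_ball k (lf_map N A B C d)"
  shows "\<forall>i<k. \<forall>z\<in>cball_N N. \<forall>w\<in>cball_N N. (\<forall>j<k. z j = w j) \<longrightarrow>
            lf_map N A B C d z i = lf_map N A B C d w i \<and>
            lf_map N (adj_mat A) (\<lambda>j. - C j) (\<lambda>j. - B j) (cnj d) z i =
            lf_map N (adj_mat A) (\<lambda>j. - C j) (\<lambda>j. - B j) (cnj d) w i"
proof (intro allI impI ballI)
  fix i and z w :: "nat \<Rightarrow> complex" assume i: "i < k" and agree: "\<forall>j<k. z j = w j"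
  note FC' = FC[OF assms(1,2) denom self Bk aut]
  note F12' = F12[OF assms(1,2) denom self Bk]
  have iN: "i < N" using i assms(2) by simp
  have a1: "\<forall>j<N. k \<le> j \<longrightarrow> A i j = 0" using FC'(2) i by blast
  have a2: "\<forall>j<N. k \<le> j \<longrightarrow> cnj (C j) = 0" using FC'(1) by simp
  have a3: "\<forall>j<N. k \<le> j \<longrightarrow> adj_mat A i j = 0" using F12'(2) i by (simp add: adj_mat_def)
  have a4: "\<forall>j<N. k \<le> j \<longrightarrow> cnj (- B j) = 0" using F12'(1) by simp
  show "lf_map N A B C d z i = lf_map N A B C d w i \<and>
            lf_map N (adj_mat A) (\<lambda>j. - C j) (\<lambda>j. - B j) (cnj d) z i =
            lf_map N (adj_mat A) (\<lambda>j. - C j) (\<lambda>j. - B j) (cnj d) w i"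
    using sum_agree[OF a1 agree] sum_agree[OF a2 agree] sum_agree[OF a3 agree] sum_agree[OF a4 agree] iN
    by (simp add: lf_map_def cinner_def)
qed

end
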